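(* Let $F$ be a hyperfield, let $p$ be an irreducible polynomial over $F$, let $n\geq 2$ and let $q_1,\dots,q_n$ be polynomials over $F$ with $p\in\boxdot_{i=1}^n q_i$. Then there is an $i\in\{1,\dots,n\}$ such that $p\sim q_i$.
   Context: A hyperfield is a set $F$ with a commutative multiplication and a multivalued addition $\boxplus:F\times F\to\mathcal P(F)$ such that: there are unique $0,1\in F$ with $(F,\cdot,1)$ a commutative monoid and $F\setminus\{0\}$ a group; $ab\boxplus ac=\{ad: d\in b\boxplus c\}$; and $(F,\boxplus,0)$ is a commutative hypergroup (sums non-empty, commutative, $a\boxplus 0=\{a\}$, unique additive inverse, associative). A polynomial over $F$ is a finitely supported sequence $(c_i)_{i\in\mathbb N}$ in $F$, written $\sum c_iT^i$; its degree is the largest $k$ with $c_k\neq0$. The hyperproduct of $p=\sum c_iT^i$ and $q=\sum d_iT^i$ is $p\boxdot q=\{\sum e_iT^i : e_i\in \boxplus_{k+l=i} c_kd_l\}$, and $\boxdot_{i=1}^n q_i=\bigcup_{r\in\boxdot_{i=1}^{n-1}q_i} r\boxdot q_n$. Polynomials $p,q$ are associated, $p\sim q$, if $p\in a\boxdot q$ for some $a\in F\setminus\{0\}$ (constants viewed as constant polynomials). A polynomial $p$ is irreducible if $\deg p\geq1$ and for every $q_1,q_2$ with $p\in q_1\boxdot q_2$ we have $p\sim q_1$ or $p\sim q_2$. *)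

theory Defs
  imports Main
begin

definition hyperfield ::
  "('a \<Rightarrow> 'a \<Rightarrow> 'a) \<Rightarrow> ('a \<Rightarrow> 'a \<Rightarrow> 'a set) \<Rightarrow> 'a \<Rightarrow> 'a \<Rightarrow> bool" where
  "hyperfield mul add z e \<longleftrightarrow>
     \<comment> \<open>(F, mul, e) commutative monoid\<close>
     (\<forall>a b c. mul (mul a b) c = mul a (mul b c)) \<and>
     (\<forall>a b. mul a b = mul b a) \<and>
     (\<forall>a. mul e a = a) \<and>
     \<comment> \<open>F without z is a group under mul\<close>
     e \<noteq> z \<and>
     (\<forall>a b. a \<noteq> z \<longrightarrow> b \<noteq> z \<longrightarrow> mul a b \<noteq> z) \<and>
     (\<forall>a. a \<noteq> z \<longrightarrow> (\<exists>b. b \<noteq> z \<and> mul a b = e)) \<and>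
     \<comment> \<open>distributivity\<close>
     (\<forall>a b c. add (mul a b) (mul a c) = mul a ` add b c) \<and>
     \<comment> \<open>commutative hypergroup\<close>
     (\<forall>a b. add a b \<noteq> {}) \<and>
     (\<forall>a b. add a b = add b a) \<and>
     (\<forall>a. add a z = {a}) \<and>
     (\<forall>a. \<exists>!b. z \<in> add a b) \<and>
     (\<forall>a b c. (\<Union>x\<in>add a b. add x c) = (\<Union>x\<in>add b c. add a x))"

definition is_poly :: "'a \<Rightarrow> (nat \<Rightarrow> 'a) \<Rightarrow> bool" where
  "is_poly z c \<longleftrightarrow> finite {i. c i \<noteq> z}"

definition const_poly :: "'a \<Rightarrow> 'a \<Rightarrow> (nat \<Rightarrow> 'a)" where
  "const_poly z a = (\<lambda>i. if i = 0 then a else z)"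

text \<open>Iterated hypersum of a list of elements (order irrelevant by commutativity/associativity).\<close>

fun hsum :: "('a \<Rightarrow> 'a \<Rightarrow> 'a set) \<Rightarrow> 'a \<Rightarrow> 'a list \<Rightarrow> 'a set" where
  "hsum add z [] = {z}"
| "hsum add z (x # xs) = (\<Union>y\<in>hsum add z xs. add x y)"

definition hprod ::
  "('a \<Rightarrow> 'a \<Rightarrow> 'a) \<Rightarrow> ('a \<Rightarrow> 'a \<Rightarrow> 'a set) \<Rightarrow> 'a \<Rightarrow>
   (nat \<Rightarrow> 'a) \<Rightarrow> (nat \<Rightarrow> 'a) \<Rightarrow> (nat \<Rightarrow> 'a) set" where
  "hprod mul add z p q =
     {r. is_poly z r \<and> (\<forall>i. r i \<in> hsum add z (map (\<lambda>k. mul (p k) (q (i - k))) [0..<Suc i]))}"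

text \<open>Iterated hyperproduct of q 1, ..., q n (meaningful for n >= 1).\<close>

fun hprodn ::
  "('a \<Rightarrow> 'a \<Rightarrow> 'a) \<Rightarrow> ('a \<Rightarrow> 'a \<Rightarrow> 'a set) \<Rightarrow> 'a \<Rightarrow>
   (nat \<Rightarrow> nat \<Rightarrow> 'a) \<Rightarrow> nat \<Rightarrow> (nat \<Rightarrow> 'a) set" where
  "hprodn mul add z q 0 = {}"
| "hprodn mul add z q (Suc 0) = {q 1}"
| "hprodn mul add z q (Suc (Suc m)) =
     (\<Union>r\<in>hprodn mul add z q (Suc m). hprod mul add z r (q (Suc (Suc m))))"

definition poly_assoc ::
  "('a \<Rightarrow> 'a \<Rightarrow> 'a) \<Rightarrow> ('a \<Rightarrow> 'a \<Rightarrow> 'a set) \<Rightarrow> 'a \<Rightarrow> (nat \<Rightarrow> 'a) \<Rightarrow> (nat \<Rightarrow> 'a) \<Rightarrow> bool" where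
  "poly_assoc mul add z p q \<longleftrightarrow> (\<exists>a. a \<noteq> z \<and> p \<in> hprod mul add z (const_poly z a) q)"

definition poly_irreducible ::
  "('a \<Rightarrow> 'a \<Rightarrow> 'a) \<Rightarrow> ('a \<Rightarrow> 'a \<Rightarrow> 'a set) \<Rightarrow> 'a \<Rightarrow> (nat \<Rightarrow> 'a) \<Rightarrow> bool" where
  "poly_irreducible mul add z p \<longleftrightarrow>
     (\<exists>k\<ge>1. p k \<noteq> z) \<and>
     (\<forall>q1 q2. is_poly z q1 \<longrightarrow> is_poly z q2 \<longrightarrow> p \<in> hprod mul add z q1 q2 \<longrightarrow>
        poly_assoc mul add z p q1 \<or> poly_assoc mul add z p q2)"

end

theory Submission
  imports Defs
begin

lemma hf_facts:
  assumes h: "hyperfield mul add z e"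
  shows "\<And>a b c. mul (mul a b) c = mul a (mul b c)"
    and "\<And>a b. mul a b = mul b a"
    and "\<And>a b. a \<noteq> z \<Longrightarrow> b \<noteq> z \<Longrightarrow> mul a b \<noteq> z"
    and "\<And>a b c. add (mul a b) (mul a c) = mul a ` add b c"
    and "\<And>a. add a z = {a}"
    and "\<And>a b. add a b = add b a"
  using h unfolding hyperfield_def by auto

lemma hf_zero:
  assumes h: "hyperfield mul add z e"
  shows "mul z b = z"
proof -
  note f = hf_facts[OF h]
  have e1: "\<And>a. mul e a = a" and enz: "e \<noteq> z"
    and inv: "\<And>a. a \<noteq> z \<Longrightarrow> (\<exists>b. b \<noteq> z \<and> mul a b = e)"
    using h unfolding hyperfield_def by auto
  have az: "mul a z = z" if anz: "a \<noteq> z" for a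
  proof -
    obtain b where b: "mul a b = e" using inv[of a] anz by blast
    have "add z (mul a z) = add (mul a (mul b z)) (mul a z)"
      by (metis b e1 f(1))
    also have "\<dots> = mul a ` add (mul b z) z" by (rule f(4))
    also have "\<dots> = {mul a (mul b z)}" using f(5) by simp
    also have "\<dots> = {z}" by (metis b e1 f(1))
    finally have "add (mul a z) z = {z}" using f(6) by metis
    thus ?thesis using f(5) by simp
  qed
  have zz: "mul z z = z"
  proof -
    have "add (mul z e) (mul z z) = mul z ` add e z" by (rule f(4))
    also have "\<dots> = {mul z e}" using f(5) by simp
    finally have "add z (mul z z) = {z}"
      using az[OF enz] f(2) by metis
    thus ?thesis using f(5) f(6) by (metis singleton_inject)
  qed
  show ?thesis using az zz f(2) by (cases "b = z") auto
qed

lemma hsum_zeros: "hsum add z (replicate m z) = {z}" if "\<And>a. add a z = {a}"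
  using that by (induction m) auto

lemma hprod_const:
  assumes h: "hyperfield mul add z e" and "is_poly z r"
  shows "p \<in> hprod mul add z (const_poly z c) r \<longleftrightarrow> is_poly z p \<and> p = (\<lambda>i. mul c (r i))"
proof -
  note f = hf_facts[OF h]
  have "map (\<lambda>k. mul (const_poly z c k) (r (i - k))) [0..<Suc i]
        = mul c (r i) # replicate i z" for i
  proof -
    have "[0..<Suc i] = 0 # [1..<Suc i]" by (simp add: upt_conv_Cons)
    moreover have "map (\<lambda>k. mul (const_poly z c k) (r (i - k))) [1..<Suc i] = replicate i z"
      by (rule nth_equalityI) (auto simp: const_poly_def hf_zero[OF h] simp del: upt_Suc)
    ultimately show ?thesis by (simp add: const_poly_def)
  qed
  moreover have "hsum add z (x # replicate i z) = {x}" for x i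
    using hsum_zeros[of add z, OF f(5)] f(5) by simp
  ultimately show ?thesis unfolding hprod_def by auto
qed

lemma is_poly_scale:
  assumes h: "hyperfield mul add z e" and "is_poly z r"
  shows "is_poly z (\<lambda>i. mul c (r i))"
proof -
  have "{i. mul c (r i) \<noteq> z} \<subseteq> {i. r i \<noteq> z}"
    using hf_zero[OF h] hf_facts(2)[OF h] by auto
  thus ?thesis using assms(2) unfolding is_poly_def by (rule finite_subset)
qed

lemma hsum_scale:
  assumes h: "hyperfield mul add z e"
  shows "mul c ` hsum add z xs = hsum add z (map (mul c) xs)"
proof (induction xs)
  case Nil
  then show ?case using hf_zero[OF h] hf_facts(2)[OF h] by simp
next
  case (Cons x xs)
  have "mul c ` hsum add z (x # xs) = (\<Union>y\<in>hsum add z xs. mul c ` add x y)" by auto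
  also have "\<dots> = (\<Union>y\<in>hsum add z xs. add (mul c x) (mul c y))"
    using hf_facts(4)[OF h] by simp
  also have "\<dots> = (\<Union>y\<in>mul c ` hsum add z xs. add (mul c x) y)" by auto
  finally show ?case using Cons by simp
qed

lemma hprod_scale:
  assumes h: "hyperfield mul add z e" and s: "s \<in> hprod mul add z r q"
  shows "(\<lambda>i. mul c (s i)) \<in> hprod mul add z (\<lambda>i. mul c (r i)) q"
proof -
  note f = hf_facts[OF h]
  have "is_poly z s" using s unfolding hprod_def by auto
  hence "is_poly z (\<lambda>i. mul c (s i))" by (rule is_poly_scale[OF h])
  moreover have "mul c (s i) \<in> hsum add z (map (\<lambda>k. mul (mul c (r k)) (q (i - k))) [0..<Suc i])" for i
  proof -
    have "s i \<in> hsum add z (map (\<lambda>k. mul (r k) (q (i - k))) [0..<Suc i])"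
      using s unfolding hprod_def by auto
    hence "mul c (s i) \<in> hsum add z (map (mul c) (map (\<lambda>k. mul (r k) (q (i - k))) [0..<Suc i]))"
      using hsum_scale[OF h, of c] by blast
    thus ?thesis by (simp add: f(1) comp_def)
  qed
  ultimately show ?thesis unfolding hprod_def by auto
qed

lemma hprodn_poly:
  assumes "\<forall>i\<in>{1..Suc m}. is_poly z (q i)" and "r \<in> hprodn mul add z q (Suc m)"
  shows "is_poly z r"
  using assms
proof (induction m arbitrary: r)
  case 0
  then show ?case by simp
next
  case (Suc m)
  then show ?case by (auto simp: hprod_def)
qed

lemma main_aux:
  assumes h: "hyperfield mul add z e"
    and irr: "poly_irreducible mul add z p"
  shows "\<forall>i\<in>{1..Suc m}. is_poly z (q i) \<Longrightarrow> c \<noteq> z \<Longrightarrow> r \<in> hprodn mul add z q (Suc m)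
     \<Longrightarrow> p = (\<lambda>i. mul c (r i)) \<Longrightarrow> \<exists>i\<in>{1..Suc m}. poly_assoc mul add z p (q i)"
proof (induction m arbitrary: c r)
  case 0
  then have "r = q 1" by simp
  have "is_poly z (q 1)" using 0 by simp
  hence "p \<in> hprod mul add z (const_poly z c) (q 1)"
    using hprod_const[OF h] is_poly_scale[OF h] 0 \<open>r = q 1\<close> by blast
  thus ?case using 0 unfolding poly_assoc_def by auto
next
  case (Suc m)
  from Suc.prems(3) obtain r' where r': "r' \<in> hprodn mul add z q (Suc m)"
    and rr: "r \<in> hprod mul add z r' (q (Suc (Suc m)))" by auto
  have pr': "is_poly z r'" using hprodn_poly[OF _ r'] Suc.prems(1) by auto
  have p1: "p \<in> hprod mul add z (\<lambda>i. mul c (r' i)) (q (Suc (Suc m)))"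
    using hprod_scale[OF h rr] Suc.prems(4) by simp
  have "is_poly z (\<lambda>i. mul c (r' i))" using is_poly_scale[OF h pr'] .
  moreover have "is_poly z (q (Suc (Suc m)))" using Suc.prems(1) by auto
  ultimately have "poly_assoc mul add z p (\<lambda>i. mul c (r' i)) \<or> poly_assoc mul add z p (q (Suc (Suc m)))"
    using irr p1 unfolding poly_irreducible_def by blast
  thus ?case
  proof
    assume "poly_assoc mul add z p (\<lambda>i. mul c (r' i))"
    then obtain a where a: "a \<noteq> z" and "p \<in> hprod mul add z (const_poly z a) (\<lambda>i. mul c (r' i))"
      unfolding poly_assoc_def by auto
    hence "p = (\<lambda>i. mul a (mul c (r' i)))"
      using hprod_const[OF h is_poly_scale[OF h pr']] by blast
    hence "p = (\<lambda>i. mul (mul a c) (r' i))" using hf_facts(1)[OF h] by simp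
    moreover have "mul a c \<noteq> z" using hf_facts(3)[OF h] a Suc.prems(2) by blast
    moreover have "\<forall>i\<in>{1..Suc m}. is_poly z (q i)" using Suc.prems(1) by auto
    ultimately have "\<exists>i\<in>{1..Suc m}. poly_assoc mul add z p (q i)"
      using Suc.IH r' by blast
    thus ?thesis by auto
  next
    assume "poly_assoc mul add z p (q (Suc (Suc m)))"
    thus ?thesis by (intro bexI[of _ "Suc (Suc m)"]) auto
  qed
qed

theorem mainTheorem2:
  fixes mul :: "'a \<Rightarrow> 'a \<Rightarrow> 'a" and add :: "'a \<Rightarrow> 'a \<Rightarrow> 'a set" and z e :: 'a
    and p :: "nat \<Rightarrow> 'a" and q :: "nat \<Rightarrow> nat \<Rightarrow> 'a" and n :: nat
  assumes "hyperfield mul add z e"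
    and "is_poly z p"
    and "poly_irreducible mul add z p"
    and "n \<ge> 2"
    and "\<forall>i\<in>{1..n}. is_poly z (q i)"
    and "p \<in> hprodn mul add z q n"
  shows "\<exists>i\<in>{1..n}. poly_assoc mul add z p (q i)"
proof -
  obtain m where n: "n = Suc (Suc m)" using assms(4) by (metis add_2_eq_Suc le_Suc_ex)
  from assms(6) n obtain r where r: "r \<in> hprodn mul add z q (Suc m)"
    and pr: "p \<in> hprod mul add z r (q n)" by auto
  have qs: "\<forall>i\<in>{1..Suc m}. is_poly z (q i)" using assms(5) n by auto
  have "is_poly z r" using hprodn_poly[OF qs r] .
  moreover have "is_poly z (q n)" using assms(5) n by auto
  ultimately have "poly_assoc mul add z p r \<or> poly_assoc mul add z p (q n)"
    using assms(3) pr unfolding poly_irreducible_def by blast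
  thus ?thesis
  proof
    assume "poly_assoc mul add z p r"
    then obtain a where a: "a \<noteq> z" and "p \<in> hprod mul add z (const_poly z a) r"
      unfolding poly_assoc_def by auto
    hence "p = (\<lambda>i. mul a (r i))" using hprod_const[OF assms(1) \<open>is_poly z r\<close>] by blast
    hence "\<exists>i\<in>{1..Suc m}. poly_assoc mul add z p (q i)"
      using main_aux[OF assms(1) assms(3) qs a r] by blast
    thus ?thesis using n by auto
  next
    assume "poly_assoc mul add z p (q n)"
    thus ?thesis using assms(4) by auto
  qed
qed

end
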